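(* Let $G$ be a cyclically $4$-edge-connected cubic graph and $E(A,B)=\{e_1,e_2,e_3,e_4\}$ a cyclic $4$-edge-cut of $G$, with $v_i$ the end-vertex of $e_i$ in $A$. Then each of the three graphs $G^A_{(12)}$, $G^A_{(13)}$, $G^A_{(14)}$ is $3$-edge-connected, and in each of them none of the edges $e^A_1,e^A_2,e^A_3,e^A_4$ is contained in a cyclic $3$-edge-cut. Moreover, if $G[A]$ is not a cycle of length four, then at least two of these three graphs are cyclically $4$-edge-connected.
   Context: Graphs may have parallel edges. An edge-cut $E(A,B)$ (edges between parts of a partition of $V(G)$) is a $k$-edge-cut if it has exactly $k$ edges, and cyclic if both $G[A]$ and $G[B]$ contain a cycle; $G$ is cyclically $k$-edge-connected if it has no cyclic edge-cut with fewer than $k$ edges. For a $4$-edge-cut $E(A,B)=\{e_1,\dots,e_4\}$ with $v_i$ the end of $e_i$ in $A$, and $\{i,j,k,\ell\}=\{1,2,3,4\}$: $G^A_{(ij)}$ is the cubic graph obtained from $G[A]$ by adding a new vertex $v_{ij}$ adjacent to $v_i$ and $v_j$, a new vertex $v_{k\ell}$ adjacent to $v_k$ and $v_\ell$, and an edge $e^A_{(ij)}=v_{ij}v_{k\ell}$. For each $m$, $e^A_m$ denotes the edge joining $v_m$ to the new vertex adjacent to it. *)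

theory Defs
  imports Main
begin

text \<open>Finite loopless multigraphs: every edge has a set of exactly two end-vertices;
parallel edges are allowed (distinct edges may have the same ends).\<close>

record ('v, 'e) multigraph =
  verts :: "'v set"
  edges :: "'e set"
  ends  :: "'e \<Rightarrow> 'v set"

definition wf_graph :: "('v, 'e) multigraph \<Rightarrow> bool" where
  "wf_graph G \<longleftrightarrow> finite (verts G) \<and> finite (edges G) \<and>
     (\<forall>e \<in> edges G. ends G e \<subseteq> verts G \<and> card (ends G e) = 2)"

definition degree :: "('v, 'e) multigraph \<Rightarrow> 'v \<Rightarrow> nat" where
  "degree G v = card {e \<in> edges G. v \<in> ends G e}"

definition cubic :: "('v, 'e) multigraph \<Rightarrow> bool" where
  "cubic G \<longleftrightarrow> wf_graph G \<and> (\<forall>v \<in> verts G. degree G v = 3)"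

definition induced :: "('v, 'e) multigraph \<Rightarrow> 'v set \<Rightarrow> ('v, 'e) multigraph" where
  "induced G A = \<lparr>verts = A, edges = {e \<in> edges G. ends G e \<subseteq> A}, ends = ends G\<rparr>"

text \<open>A cycle of length n (n \<ge> 2; length 2 = pair of parallel edges):
distinct vertices vs 0..n-1 and distinct edges es 0..n-1, es i joining vs i and vs (i+1 mod n).\<close>
definition is_cycle_in :: "('v, 'e) multigraph \<Rightarrow> nat \<Rightarrow> (nat \<Rightarrow> 'v) \<Rightarrow> (nat \<Rightarrow> 'e) \<Rightarrow> bool" where
  "is_cycle_in G n vs es \<longleftrightarrow> n \<ge> 2 \<and> inj_on vs {..<n} \<and> inj_on es {..<n} \<and>
     (\<forall>i < n. vs i \<in> verts G \<and> es i \<in> edges G \<and> ends G (es i) = {vs i, vs ((i + 1) mod n)})"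

definition has_cycle :: "('v, 'e) multigraph \<Rightarrow> bool" where
  "has_cycle G \<longleftrightarrow> (\<exists>n vs es. is_cycle_in G n vs es)"

definition is_4cycle :: "('v, 'e) multigraph \<Rightarrow> bool" where
  "is_4cycle G \<longleftrightarrow> (\<exists>vs es. is_cycle_in G 4 vs es \<and>
      vs ` {..<4} = verts G \<and> es ` {..<4} = edges G)"

definition cut :: "('v, 'e) multigraph \<Rightarrow> 'v set \<Rightarrow> 'e set" where
  "cut G A = {e \<in> edges G. ends G e \<inter> A \<noteq> {} \<and> ends G e \<inter> (verts G - A) \<noteq> {}}"

definition cyclic_cut :: "('v, 'e) multigraph \<Rightarrow> 'v set \<Rightarrow> bool" where
  "cyclic_cut G A \<longleftrightarrow> A \<subseteq> verts G \<and> has_cycle (induced G A) \<and> has_cycle (induced G (verts G - A))"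

definition cyc_edge_connected :: "nat \<Rightarrow> ('v, 'e) multigraph \<Rightarrow> bool" where
  "cyc_edge_connected k G \<longleftrightarrow> (\<forall>A. cyclic_cut G A \<longrightarrow> card (cut G A) \<ge> k)"

definition edge_connected :: "nat \<Rightarrow> ('v, 'e) multigraph \<Rightarrow> bool" where
  "edge_connected k G \<longleftrightarrow> (\<forall>A. A \<subseteq> verts G \<and> A \<noteq> {} \<and> A \<noteq> verts G \<longrightarrow> card (cut G A) \<ge> k)"

definition endA :: "('v, 'e) multigraph \<Rightarrow> 'v set \<Rightarrow> 'e \<Rightarrow> 'v" where
  "endA G A e = (THE v. v \<in> ends G e \<inter> A)"

text \<open>G^A_(ij) for a cut E(A,B) whose edges are cs 1, ..., cs 4.
 Vertices: Inl v for v in A; Inr True = v_ij, Inr False = v_kl.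
 Edges: Inl e for edges of G[A]; Inr 0 = e^A_(ij); Inr m = e^A_m (m = 1..4).\<close>
definition GA :: "('v, 'e) multigraph \<Rightarrow> 'v set \<Rightarrow> (nat \<Rightarrow> 'e) \<Rightarrow> nat \<Rightarrow> nat
                   \<Rightarrow> ('v + bool, 'e + nat) multigraph" where
  "GA G A cs i j = \<lparr>verts = Inl ` A \<union> {Inr True, Inr False},
     edges = Inl ` {e \<in> edges G. ends G e \<subseteq> A} \<union> Inr ` {0..4},
     ends = (\<lambda>x. case x of
                Inl e \<Rightarrow> Inl ` ends G e
              | Inr m \<Rightarrow> (if m = 0 then {Inr True, Inr False}
                          else {Inl (endA G A (cs m)), Inr (m = i \<or> m = j)}))\<rparr>"

end

theory Submission
  imports Defs
begin

lemma wf_induced: "wf_graph G \<Longrightarrow> S \<subseteq> verts G \<Longrightarrow> wf_graph (induced G S)"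
  unfolding wf_graph_def induced_def by (auto intro: finite_subset)

lemma cycle_induced_sub:
  assumes "is_cycle_in (induced G S) n vs es" "S \<subseteq> T"
  shows "is_cycle_in (induced G T) n vs es"
  using assms unfolding is_cycle_in_def induced_def by auto

lemma has_cycle_mono:
  assumes "has_cycle (induced G S)" "S \<subseteq> T"
  shows "has_cycle (induced G T)"
  using assms cycle_induced_sub unfolding has_cycle_def by metis

lemma has_cycle_induced_G:
  assumes "has_cycle (induced G S)" "S \<subseteq> verts G"
  shows "has_cycle G"
  using assms unfolding has_cycle_def is_cycle_in_def induced_def by auto blast

lemma cycle_card:
  assumes "has_cycle (induced G S)" "finite S"
  shows "2 \<le> card S"
proof -
  obtain n vs es where c: "is_cycle_in (induced G S) n vs es"
    using assms unfolding has_cycle_def by blast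
  hence n: "n \<ge> 2" and inj: "inj_on vs {..<n}" and vin: "\<forall>i<n. vs i \<in> S"
    unfolding is_cycle_in_def induced_def by auto
  have "vs 0 \<noteq> vs 1" using inj n by (auto dest: inj_onD)
  moreover have "{vs 0, vs 1} \<subseteq> S" using vin n by auto
  ultimately show ?thesis using assms(2) card_mono[of S "{vs 0, vs 1}"] by auto
qed

lemma cycle_card_edges:
  assumes "has_cycle (induced G S)" "finite (edges G)"
  shows "2 \<le> card {e \<in> edges G. ends G e \<subseteq> S}"
proof -
  obtain n vs es where c: "is_cycle_in (induced G S) n vs es"
    using assms unfolding has_cycle_def by blast
  hence n: "n \<ge> 2" and inj: "inj_on es {..<n}" and ein: "\<forall>i<n. es i \<in> {e \<in> edges G. ends G e \<subseteq> S}"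
    unfolding is_cycle_in_def induced_def by auto
  have "es 0 \<noteq> es 1" using inj n by (auto dest: inj_onD)
  moreover have "{es 0, es 1} \<subseteq> {e \<in> edges G. ends G e \<subseteq> S}" using ein n by auto
  ultimately show ?thesis using assms(2) card_mono[of "{e \<in> edges G. ends G e \<subseteq> S}" "{es 0, es 1}"] by auto
qed

lemma handshake:
  assumes wf: "wf_graph G" and S: "S \<subseteq> verts G" and d: "\<forall>v\<in>S. degree G v = 3"
  shows "3 * card S = 2 * card {e \<in> edges G. ends G e \<subseteq> S} + card (cut G S)"
proof -
  have finE: "finite (edges G)" and finV: "finite (verts G)" using wf by (auto simp: wf_graph_def)
  hence finS: "finite S" using S finite_subset by auto
  have "3 * card S = (\<Sum>v\<in>S. degree G v)" using d by simp
  also have "\<dots> = (\<Sum>v\<in>S. \<Sum>e\<in>edges G. (of_bool (v \<in> ends G e) :: nat))"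
    using finE by (auto simp: degree_def intro!: sum.cong arg_cong[where f=card])
  also have "\<dots> = (\<Sum>e\<in>edges G. \<Sum>v\<in>S. (of_bool (v \<in> ends G e) :: nat))"
    by (rule sum.swap)
  also have "\<dots> = (\<Sum>e\<in>edges G. 2 * of_bool (ends G e \<subseteq> S) + of_bool (e \<in> cut G S))"
  proof (rule sum.cong[OF refl])
    fix e assume e: "e \<in> edges G"
    then obtain a b where ab: "ends G e = {a, b}" "a \<noteq> b" "a \<in> verts G" "b \<in> verts G"
      using wf unfolding wf_graph_def by (auto simp: card_2_iff)
    have "(\<Sum>v\<in>S. (of_bool (v \<in> ends G e) :: nat)) = card (S \<inter> {x. x \<in> ends G e})"
      by (metis of_nat_id sum_of_bool_eq finS)
    also have "\<dots> = card (S \<inter> {a, b})" using ab by (metis mem_Collect_eq set_eq_iff)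
    also have "\<dots> = 2 * of_bool (ends G e \<subseteq> S) + of_bool (e \<in> cut G S)"
      using ab e by (auto simp: cut_def card_insert_if)
    finally show "(\<Sum>v\<in>S. (of_bool (v \<in> ends G e) :: nat)) = 2 * of_bool (ends G e \<subseteq> S) + of_bool (e \<in> cut G S)" .
  qed
  also have "\<dots> = 2 * (\<Sum>e\<in>edges G. (of_bool (ends G e \<subseteq> S) :: nat)) + (\<Sum>e\<in>edges G. (of_bool (e \<in> cut G S) :: nat))"
    by (simp add: sum.distrib sum_distrib_left)
  also have "\<dots> = 2 * card {e \<in> edges G. ends G e \<subseteq> S} + card (cut G S)"
    using finE by (simp add: cut_def Int_def conj_commute)
  finally show ?thesis .
qed



lemma cycle_from_mindeg:
  assumes wf: "wf_graph G" and ne: "verts G \<noteq> {}" and deg: "\<forall>v\<in>verts G. 2 \<le> degree G v"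
  shows "has_cycle G"
proof -
  have finV: "finite (verts G)" and finE: "finite (edges G)" using wf by (auto simp: wf_graph_def)
  have two: "card (ends G e) = 2" "ends G e \<subseteq> verts G" if "e \<in> edges G" for e
    using wf that by (auto simp: wf_graph_def)
  define oth where "oth e v = (SOME w. w \<in> ends G e \<and> w \<noteq> v)" for e v
  define nxt where "nxt e v = (SOME e'. e' \<in> edges G \<and> v \<in> ends G e' \<and> e' \<noteq> e)" for e v
  have oth: "oth e v \<in> ends G e \<and> oth e v \<noteq> v" if ee: "e \<in> edges G" for e v
  proof -
    obtain a b where "ends G e = {a, b}" "a \<noteq> b" using two(1)[OF ee] by (auto simp: card_2_iff)
    hence "\<exists>w. w \<in> ends G e \<and> w \<noteq> v" by auto
    thus ?thesis unfolding oth_def by (rule someI_ex)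
  qed
  have ends_eq: "ends G e = {v, oth e v}" if ee: "e \<in> edges G" "v \<in> ends G e" for e v
  proof -
    obtain a b where "ends G e = {a, b}" "a \<noteq> b" using two(1)[OF ee(1)] by (auto simp: card_2_iff)
    thus ?thesis using oth[OF ee(1), of v] ee(2) by auto
  qed
  have nxt: "nxt e v \<in> edges G \<and> v \<in> ends G (nxt e v) \<and> nxt e v \<noteq> e" if vv: "v \<in> verts G" for e v
  proof -
    have "2 \<le> card {e \<in> edges G. v \<in> ends G e}" using deg vv by (auto simp: degree_def)
    then obtain x y where "x \<in> {e \<in> edges G. v \<in> ends G e}" "y \<in> {e \<in> edges G. v \<in> ends G e}" "x \<noteq> y"
      using card_le_Suc0_iff_eq[of "{e \<in> edges G. v \<in> ends G e}"] finE by fastforce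
    hence "\<exists>e'. e' \<in> edges G \<and> v \<in> ends G e' \<and> e' \<noteq> e" by auto
    thus ?thesis unfolding nxt_def by (rule someI_ex)
  qed
  obtain v0 where v0: "v0 \<in> verts G" using ne by auto
  obtain e0 where e0: "e0 \<in> edges G" "v0 \<in> ends G e0" using nxt[OF v0] by blast
  define step where "step = (\<lambda>(v::'a, e::'b). let e' = nxt e v in (oth e' v, e'))"
  define st where "st n = (step ^^ n) (oth e0 v0, e0)" for n
  define W where "W n = fst (st n)" for n
  define F where "F n = snd (st n)" for n
  have stS: "st (Suc n) = step (st n)" for n unfolding st_def by simp
  have WS: "F (Suc n) = nxt (F n) (W n)" "W (Suc n) = oth (F (Suc n)) (W n)" for n
    unfolding W_def F_def stS step_def by (auto simp: Let_def split: prod.splits)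
  have inv: "F n \<in> edges G \<and> W n \<in> ends G (F n)" for n
  proof (induction n)
    case 0
    then show ?case using e0 oth[OF e0(1), of v0] by (simp add: W_def F_def st_def)
  next
    case (Suc n)
    hence wv: "W n \<in> verts G" using two(2) by auto
    have f: "F (Suc n) \<in> edges G" "W n \<in> ends G (F (Suc n))" using WS(1)[of n] nxt[OF wv, of "F n"] by auto
    have "W (Suc n) \<in> ends G (F (Suc n))" using WS(2)[of n] oth[OF f(1), of "W n"] by simp
    thus ?case using f by simp
  qed
  have Wv: "W n \<in> verts G" for n using inv two(2) by blast
  have eends: "ends G (F (Suc n)) = {W n, W (Suc n)}" for n
  proof -
    have "F (Suc n) \<in> edges G" "W n \<in> ends G (F (Suc n))" using WS(1)[of n] nxt[OF Wv[of n], of "F n"] by auto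
    from ends_eq[OF this] show ?thesis using WS(2)[of n] by simp
  qed
  have neqF: "F (Suc n) \<noteq> F n" for n using WS[of n] nxt[OF Wv[of n]] by simp
  have neqW: "W (Suc n) \<noteq> W n" for n
  proof -
    have "F (Suc n) \<in> edges G" using inv by blast
    thus ?thesis using WS(2)[of n] oth[of "F (Suc n)" "W n"] by simp
  qed
  have "\<not> inj W"
  proof
    assume "inj W"
    hence "infinite (range W)" by (simp add: finite_image_iff)
    moreover have "range W \<subseteq> verts G" using Wv by auto
    ultimately show False using finV finite_subset by blast
  qed
  then obtain a b where ab: "W a = W b" "a \<noteq> b" unfolding inj_def by blast
  then obtain i0 j0 where "i0 < j0" "W i0 = W j0" by (metis linorder_neqE_nat)
  hence exP: "\<exists>i<j0. W i = W j0" by blast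
  define J where "J = (LEAST j. \<exists>i<j. W i = W j)"
  have "\<exists>i<J. W i = W J" unfolding J_def by (rule LeastI_ex) (use exP in blast)
  then obtain i where i: "i < J" "W i = W J" by blast
  have injW: "inj_on W {..<J}"
  proof (rule inj_onI)
    fix x y assume xy: "x \<in> {..<J}" "y \<in> {..<J}" "W x = W y"
    show "x = y"
    proof (rule ccontr)
      assume "x \<noteq> y"
      then obtain x' y' where "x' < y'" "W x' = W y'" "y' < J" using xy by (metis linorder_neqE_nat lessThan_iff)
      hence "\<exists>i<y'. W i = W y'" by blast
      hence "J \<le> y'" unfolding J_def by (rule Least_le)
      thus False using \<open>y' < J\<close> by auto
    qed
  qed
  define n where "n = J - i"
  define vs where "vs k = W (i + k)" for k
  define es where "es k = F (i + k + 1)" for k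
  have n1: "n \<noteq> 1"
  proof
    assume "n = 1" hence "J = Suc i" using i unfolding n_def by simp
    thus False using neqW[of i] i by simp
  qed
  have n2: "n \<ge> 2" using n1 i unfolding n_def by simp
  have Wi: "W (i + n) = W i" using i unfolding n_def by simp
  have injvs: "inj_on vs {..<n}"
    unfolding vs_def n_def inj_on_def
  proof (intro ballI impI)
    fix x y assume "x \<in> {..<J - i}" "y \<in> {..<J - i}" "W (i + x) = W (i + y)"
    thus "x = y" using injW unfolding inj_on_def by (metis lessThan_iff less_diff_conv add.commute add_left_cancel)
  qed
  have esends: "ends G (es k) = {vs k, vs ((k + 1) mod n)}" if "k < n" for k
  proof (cases "k + 1 < n")
    case True
    then show ?thesis using eends[of "i + k"] unfolding es_def vs_def by simp
  next
    case False
    hence "k + 1 = n" using that by simp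
    hence "Suc (i + k) = i + n" by simp
    hence "W (Suc (i + k)) = W i" using Wi by metis
    then show ?thesis using eends[of "i + k"] Wi \<open>k + 1 = n\<close> unfolding es_def vs_def by simp
  qed
  have injes: "inj_on es {..<n}"
  proof -
    have noteq: False if kk: "k < k'" "k' < n" "es k = es k'" for k k'
    proof -
      have "{W (i+k), W (i+k+1)} = {W (i+k'), W (i+k'+1)}"
        using eends[of "i+k"] eends[of "i+k'"] kk(3) unfolding es_def by simp
      moreover have "W (i+k) \<noteq> W (i+k')"
      proof
        assume "W (i+k) = W (i+k')"
        moreover have "i+k \<in> {..<J}" "i+k' \<in> {..<J}" using kk unfolding n_def by auto
        ultimately have "i+k = i+k'" using injW by (meson inj_onD)
        thus False using kk by simp
      qed
      ultimately have e1: "W (i+k) = W (i+k'+1)" and e2: "W (i+k+1) = W (i+k')"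
        by (auto simp: doubleton_eq_iff)
      have iw: "\<And>a b. a < J \<Longrightarrow> b < J \<Longrightarrow> W a = W b \<Longrightarrow> a = b"
        using injW by (auto dest: inj_onD)
      have "i + k + 1 = i + k'" by (rule iw) (use kk e2 in \<open>auto simp: n_def\<close>)
      hence kk1: "k + 1 = k'" by simp
      show False
      proof (cases "i + k + 2 < J")
        case True
        have "i + k + 2 = i + k' + 1" using kk1 by simp
        hence "W (i + k) = W (i + k + 2)" using e1 by metis
        hence "i + k = i + k + 2" by (rule iw[rotated 2]) (use True in auto)
        thus ?thesis by simp
      next
        case False
        hence "i + k' + 1 = J" using kk kk1 unfolding n_def by simp
        hence "W (i + k) = W i" using e1 i by simp
        hence "i + k = i" by (rule iw[rotated 2]) (use kk i in \<open>auto simp: n_def\<close>)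
        hence "k = 0" by simp
        hence "k' = 1" using kk1 by simp
        hence "F (Suc (Suc i)) = F (Suc i)" using kk(3) \<open>k = 0\<close> unfolding es_def by simp
        thus False using neqF by blast
      qed
    qed
    show ?thesis
    proof (rule inj_onI)
      fix x y assume "x \<in> {..<n}" "y \<in> {..<n}" "es x = es y"
      thus "x = y" using noteq[of x y] noteq[of y x] by (cases x y rule: linorder_cases) auto
    qed
  qed
  have "\<forall>k<n. vs k \<in> verts G \<and> es k \<in> edges G \<and> ends G (es k) = {vs k, vs ((k + 1) mod n)}"
    using esends Wv inv unfolding vs_def es_def by blast
  hence "is_cycle_in G n vs es"
    unfolding is_cycle_in_def using n2 injvs injes by blast
  thus ?thesis unfolding has_cycle_def by blast
qed

lemma cycle_from_edges:
  "wf_graph G \<Longrightarrow> verts G \<noteq> {} \<Longrightarrow> card (verts G) \<le> card (edges G) \<Longrightarrow> has_cycle G"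
proof (induction "card (verts G)" arbitrary: G rule: less_induct)
  case less
  show ?case
  proof (cases "\<forall>v\<in>verts G. 2 \<le> degree G v")
    case True
    then show ?thesis using cycle_from_mindeg less.prems by blast
  next
    case False
    then obtain v where v0: "v \<in> verts G" "\<not> 2 \<le> degree G v" by blast
    hence v: "v \<in> verts G" "degree G v \<le> 1" by auto
    have finV: "finite (verts G)" and finE: "finite (edges G)" using less.prems(1) by (auto simp: wf_graph_def)
    define G' where "G' = induced G (verts G - {v})"
    have wf': "wf_graph G'" unfolding G'_def by (rule wf_induced[OF less.prems(1)]) blast
    have vG': "verts G' = verts G - {v}" unfolding G'_def induced_def by simp
    have eG': "edges G' = {e \<in> edges G. ends G e \<subseteq> verts G - {v}}" unfolding G'_def induced_def by simp
    have sub: "edges G \<subseteq> edges G' \<union> {e \<in> edges G. v \<in> ends G e}"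
    proof
      fix e assume e: "e \<in> edges G"
      hence "ends G e \<subseteq> verts G" using less.prems(1) by (simp add: wf_graph_def)
      thus "e \<in> edges G' \<union> {e \<in> edges G. v \<in> ends G e}" using e unfolding eG' by blast
    qed
    have f1: "finite (edges G')" using finE unfolding eG' by simp
    have f2: "finite {e \<in> edges G. v \<in> ends G e}" using finE by simp
    have "card (edges G) \<le> card (edges G' \<union> {e \<in> edges G. v \<in> ends G e})"
      by (rule card_mono) (use f1 f2 sub in auto)
    also have "\<dots> \<le> card (edges G') + card {e \<in> edges G. v \<in> ends G e}" by (rule card_Un_le)
    finally have ce: "card (edges G) \<le> card (edges G') + 1" using v(2) unfolding degree_def by linarith
    have cv: "card (verts G') = card (verts G) - 1" unfolding vG' using v finV by simp
    have pos: "card (verts G) > 0" using v finV card_gt_0_iff by blast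
    show ?thesis
    proof (cases "verts G' = {}")
      case True
      hence "verts G = {v}" using v unfolding vG' by blast
      have "edges G = {}"
      proof (rule ccontr)
        assume "edges G \<noteq> {}"
        then obtain e where e: "e \<in> edges G" by blast
        hence c2: "card (ends G e) = 2" and sv: "ends G e \<subseteq> {v}" using less.prems(1) \<open>verts G = {v}\<close>
          unfolding wf_graph_def by auto
        have "card (ends G e) \<le> card {v}" by (rule card_mono) (use sv in auto)
        thus False using c2 by simp
      qed
      thus ?thesis using less.prems(3) \<open>verts G = {v}\<close> by simp
    next
      case False
      have lt: "card (verts G') < card (verts G)" using cv pos by linarith
      moreover have "card (verts G') \<le> card (edges G')" using ce cv less.prems(3) by linarith
      ultimately have "has_cycle G'" using less.hyps wf' False by blast
      thus ?thesis unfolding G'_def by (rule has_cycle_induced_G) blast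
    qed
  qed
qed



lemma cut_compl: "X \<subseteq> verts G \<Longrightarrow> cut G (verts G - X) = cut G X"
  unfolding cut_def by (auto simp: double_diff)

lemma cyclic_cut_compl: "X \<subseteq> verts G \<Longrightarrow> cyclic_cut G (verts G - X) = cyclic_cut G X"
  unfolding cyclic_cut_def by (auto simp: double_diff)

lemma card_filter_sum: "finite F \<Longrightarrow> card {m \<in> F. P m} = (\<Sum>m\<in>F. (of_bool (P m) :: nat))"
proof -
  assume f: "finite F"
  have "(\<Sum>m\<in>F. (of_bool (P m) :: nat)) = of_nat (card (F \<inter> {x. P x}))" using f by simp
  moreover have "F \<inter> {x. P x} = {m \<in> F. P m}" by auto
  ultimately show ?thesis by simp
qed

lemma card_1_4: "card {m \<in> {1..4::nat}. P m} = of_bool (P 1) + of_bool (P 2) + of_bool (P 3) + of_bool (P 4)"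
proof -
  have e: "{1..4::nat} = insert 1 (insert 2 (insert 3 {4}))" by auto
  have "card {m \<in> {1..4::nat}. P m} = (\<Sum>m\<in>{1..4}. (of_bool (P m) :: nat))" by (rule card_filter_sum) simp
  also have "\<dots> = of_bool (P 1) + (of_bool (P 2) + (of_bool (P 3) + of_bool (P 4)))"
    unfolding e by (subst sum.insert; simp)+
  finally show ?thesis by (simp only: add.assoc)
qed

lemma card_0_4: "card {m \<in> {0..4::nat}. P m} = of_bool (P 0) + of_bool (P 1) + of_bool (P 2) + of_bool (P 3) + of_bool (P 4)"
proof -
  have e: "{0..4::nat} = insert 0 (insert 1 (insert 2 (insert 3 {4})))" by auto
  have "card {m \<in> {0..4::nat}. P m} = (\<Sum>m\<in>{0..4}. (of_bool (P m) :: nat))" by (rule card_filter_sum) simp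
  also have "\<dots> = of_bool (P 0) + (of_bool (P 1) + (of_bool (P 2) + (of_bool (P 3) + of_bool (P 4))))"
    unfolding e by (subst sum.insert; simp)+
  finally show ?thesis by (simp only: add.assoc)
qed

lemma card_2_4: "card {m \<in> {2,3,4::nat}. P m} = of_bool (P 2) + of_bool (P 3) + of_bool (P 4)"
proof -
  have "card {m \<in> {2,3,4::nat}. P m} = (\<Sum>m\<in>{2,3,4}. (of_bool (P m) :: nat))" by (rule card_filter_sum) simp
  also have "\<dots> = of_bool (P 2) + (of_bool (P 3) + of_bool (P 4))"
    by (subst sum.insert; simp)+
  finally show ?thesis by (simp only: add.assoc)
qed


locale cset =
  fixes G :: "('v, 'e) multigraph" and A :: "'v set" and cs :: "nat \<Rightarrow> 'e"
  assumes cub: "cubic G" and c4: "cyc_edge_connected 4 G" and cc: "cyclic_cut G A"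
    and cA: "card (cut G A) = 4" and injcs: "inj_on cs {1..4}" and img: "cs ` {1..4} = cut G A"
begin

definition vv :: "nat \<Rightarrow> 'v" where "vv m = endA G A (cs m)"
definition CA :: "'v set \<Rightarrow> 'e set" where
  "CA S = {e \<in> edges G. ends G e \<subseteq> A \<and> ends G e \<inter> S \<noteq> {} \<and> ends G e \<inter> (A - S) \<noteq> {}}"
definition EA :: "'e set" where "EA = {e \<in> edges G. ends G e \<subseteq> A}"

lemma wf: "wf_graph G" using cub by (simp add: cubic_def)
lemma finV: "finite (verts G)" using wf by (simp add: wf_graph_def)
lemma finE: "finite (edges G)" using wf by (simp add: wf_graph_def)
lemma AV: "A \<subseteq> verts G" using cc by (simp add: cyclic_cut_def)
lemma finA: "finite A" using AV finV finite_subset by auto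
lemma deg3: "v \<in> verts G \<Longrightarrow> degree G v = 3" using cub by (simp add: cubic_def)
lemma ends2: "e \<in> edges G \<Longrightarrow> card (ends G e) = 2 \<and> ends G e \<subseteq> verts G"
  using wf by (simp add: wf_graph_def)

lemma cutA_end:
  assumes "e \<in> cut G A"
  shows "ends G e \<inter> A = {endA G A e} \<and> \<not> ends G e \<subseteq> A \<and> e \<in> edges G"
proof -
  have e: "e \<in> edges G" "ends G e \<inter> A \<noteq> {}" "ends G e \<inter> (verts G - A) \<noteq> {}"
    using assms by (auto simp: cut_def)
  obtain a b where ab: "ends G e = {a, b}" "a \<noteq> b" using ends2[OF e(1)] by (auto simp: card_2_iff)
  have "\<exists>u. ends G e \<inter> A = {u}"
  proof (cases "a \<in> A")
    case True
    hence "b \<notin> A" using e(3) ab(1) by auto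
    thus ?thesis using True ab by auto
  next
    case False
    hence "b \<in> A" using e(2) ab(1) by auto
    thus ?thesis using False ab by auto
  qed
  then obtain u where u: "ends G e \<inter> A = {u}" by blast
  hence "endA G A e = u" unfolding endA_def by auto
  moreover have "\<not> ends G e \<subseteq> A" using e(3) by blast
  ultimately show ?thesis using u e(1) by simp
qed

lemma vv:
  assumes "m \<in> {1..4}"
  shows "vv m \<in> A" "ends G (cs m) \<inter> A = {vv m}" "\<not> ends G (cs m) \<subseteq> A" "cs m \<in> edges G"
    "vv m \<in> ends G (cs m)"
proof -
  have "cs m \<in> cut G A" using img assms by blast
  thus "vv m \<in> A" "ends G (cs m) \<inter> A = {vv m}" "\<not> ends G (cs m) \<subseteq> A" "cs m \<in> edges G"
    "vv m \<in> ends G (cs m)"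
    using cutA_end[of "cs m"] unfolding vv_def by auto
qed

lemma cutG:
  assumes S: "S \<subseteq> A"
  shows "card (cut G S) = card (CA S) + card {m \<in> {1..4}. vv m \<in> S}"
proof -
  have eq: "cut G S = CA S \<union> cs ` {m \<in> {1..4}. vv m \<in> S}"
  proof
    show "cut G S \<subseteq> CA S \<union> cs ` {m \<in> {1..4}. vv m \<in> S}"
    proof
      fix e assume e: "e \<in> cut G S"
      hence eE: "e \<in> edges G" and m1: "ends G e \<inter> S \<noteq> {}" and m2: "ends G e \<inter> (verts G - S) \<noteq> {}"
        by (auto simp: cut_def)
      show "e \<in> CA S \<union> cs ` {m \<in> {1..4}. vv m \<in> S}"
      proof (cases "ends G e \<subseteq> A")
        case True
        thus ?thesis using eE m1 m2 unfolding CA_def by auto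
      next
        case False
        hence "e \<in> cut G A" using eE m1 S ends2[OF eE] unfolding cut_def by auto
        hence "e \<in> cs ` {1..4}" using img by simp
        then obtain m where m: "m \<in> {1..4}" "e = cs m" by blast
        have "ends G (cs m) \<inter> S \<noteq> {}" using m1 m(2) by simp
        then obtain x where x: "x \<in> ends G (cs m)" "x \<in> S" by blast
        hence "x \<in> ends G (cs m) \<inter> A" using S by blast
        hence "x = vv m" using vv(2)[OF m(1)] by simp
        hence "vv m \<in> S" using x by simp
        thus ?thesis using m by auto
      qed
    qed
  next
    show "CA S \<union> cs ` {m \<in> {1..4}. vv m \<in> S} \<subseteq> cut G S"
    proof
      fix e assume "e \<in> CA S \<union> cs ` {m \<in> {1..4}. vv m \<in> S}"
      thus "e \<in> cut G S"
      proof
        assume "e \<in> CA S" thus ?thesis using AV unfolding CA_def cut_def by auto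
      next
        assume "e \<in> cs ` {m \<in> {1..4}. vv m \<in> S}"
        then obtain m where m: "m \<in> {1..4}" "vv m \<in> S" "e = cs m" by auto
        then obtain w where "w \<in> ends G e" "w \<notin> A" using vv(3)[OF m(1)] by auto
        moreover have "w \<in> verts G" using calculation ends2 vv(4)[OF m(1)] m(3) by auto
        ultimately show ?thesis using m vv(4,5)[OF m(1)] S unfolding cut_def by auto
      qed
    qed
  qed
  have disj: "CA S \<inter> cs ` {m \<in> {1..4}. vv m \<in> S} = {}" using vv(3) unfolding CA_def by auto
  have "card (cs ` {m \<in> {1..4}. vv m \<in> S}) = card {m \<in> {1..4}. vv m \<in> S}"
    by (rule card_image) (rule inj_on_subset[OF injcs], auto)
  moreover have "finite (CA S)" using finE unfolding CA_def by auto
  moreover have "card (CA S \<union> cs ` {m \<in> {1..4}. vv m \<in> S}) = card (CA S) + card (cs ` {m \<in> {1..4}. vv m \<in> S})"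
    by (rule card_Un_disjoint) (use calculation disj in auto)
  ultimately show ?thesis unfolding eq by simp
qed

lemma CA_compl: assumes "S \<subseteq> A" shows "CA (A - S) = CA S"
proof -
  have "A - (A - S) = S" using assms by blast
  thus ?thesis unfolding CA_def by blast
qed

lemma hs: assumes "S \<subseteq> verts G" shows "3 * card S = 2 * card {e \<in> edges G. ends G e \<subseteq> S} + card (cut G S)"
proof (rule handshake[OF wf assms])
  show "\<forall>v\<in>S. degree G v = 3" using deg3 assms by blast
qed

lemma Bcyc: "has_cycle (induced G (verts G - A))" using cc by (simp add: cyclic_cut_def)
lemma Acyc: "has_cycle (induced G A)" using cc by (simp add: cyclic_cut_def)

lemma N:
  assumes S: "S \<subseteq> A" "S \<noteq> {}"
  shows "card (cut G S) \<ge> 4 \<or> card (cut G S) \<ge> card S + 2"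
proof (rule ccontr)
  assume "\<not> ?thesis"
  hence lt: "card (cut G S) < 4" "card (cut G S) < card S + 2" by auto
  have SV: "S \<subseteq> verts G" using S AV by auto
  have "card S \<le> card {e \<in> edges G. ends G e \<subseteq> S}" using hs[OF SV] lt by linarith
  moreover have "verts (induced G S) = S" "edges (induced G S) = {e \<in> edges G. ends G e \<subseteq> S}"
    by (simp_all add: induced_def)
  ultimately have "has_cycle (induced G S)"
    using cycle_from_edges[OF wf_induced[OF wf SV]] S(2) by simp
  moreover have "has_cycle (induced G (verts G - S))" using has_cycle_mono[OF Bcyc] S(1) by blast
  ultimately have "cyclic_cut G S" using SV unfolding cyclic_cut_def by blast
  hence "4 \<le> card (cut G S)" using c4 unfolding cyc_edge_connected_def by blast
  thus False using lt by linarith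
qed

lemma cardA3: "card A \<ge> 3"
proof -
  have "2 \<le> card {e \<in> edges G. ends G e \<subseteq> A}" using cycle_card_edges[OF Acyc finE] .
  thus ?thesis using hs[OF AV] cA by linarith
qed

lemma edge2:
  assumes "u \<in> A" "w \<in> A" "u \<noteq> w" "card (cut G {u, w}) = 4"
  shows "\<exists>e \<in> edges G. ends G e = {u, w}"
proof -
  have "{u,w} \<subseteq> verts G" using assms AV by auto
  from hs[OF this] assms have "card {e \<in> edges G. ends G e \<subseteq> {u, w}} = 1" by simp
  then obtain e where "{e \<in> edges G. ends G e \<subseteq> {u, w}} = {e}" by (rule card_1_singletonE)
  hence "e \<in> edges G" "ends G e \<subseteq> {u, w}" by auto
  moreover have "card (ends G e) = card {u, w}" using ends2 calculation assms(3) by auto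
  ultimately have "ends G e = {u, w}" using card_subset_eq[of "{u,w}" "ends G e"] by auto
  thus ?thesis using \<open>e \<in> edges G\<close> by blast
qed

lemma submod:
  assumes "S \<subseteq> verts G" "T \<subseteq> verts G"
  shows "card (cut G (S \<inter> T)) + card (cut G (S \<union> T)) \<le> card (cut G S) + card (cut G T)"
proof -
  define E where "E U = {e \<in> edges G. ends G e \<subseteq> U}" for U
  have fin: "finite (E U)" for U using finE unfolding E_def by auto
  have "E (S \<inter> T) = E S \<inter> E T" unfolding E_def by auto
  moreover have "E S \<union> E T \<subseteq> E (S \<union> T)" unfolding E_def by auto
  ultimately have "card (E S) + card (E T) \<le> card (E (S \<inter> T)) + card (E (S \<union> T))"
    using card_Un_Int[OF fin fin, of S T] card_mono[OF fin, of "E S \<union> E T" "S \<union> T"] by simp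
  moreover have "card (S \<inter> T) + card (S \<union> T) = card S + card T"
    using card_Un_Int[of S T] assms finV finite_subset by (metis add.commute)
  moreover have "3 * card S = 2 * card (E S) + card (cut G S)" using hs[of S] assms unfolding E_def by simp
  moreover have "3 * card T = 2 * card (E T) + card (cut G T)" using hs[of T] assms unfolding E_def by simp
  moreover have "3 * card (S \<inter> T) = 2 * card (E (S \<inter> T)) + card (cut G (S \<inter> T))"
    using hs[of "S \<inter> T"] assms unfolding E_def by auto
  moreover have "3 * card (S \<union> T) = 2 * card (E (S \<union> T)) + card (cut G (S \<union> T))"
    using hs[of "S \<union> T"] assms unfolding E_def by auto
  ultimately show ?thesis by linarith
qed

end


context cset
begin

lemma Nsets:
  assumes "S \<subseteq> A"
  shows "S \<noteq> {} \<longrightarrow> card (cut G S) \<ge> 3" "card S \<ge> 2 \<longrightarrow> card (cut G S) \<ge> 4"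
proof -
  have "finite S" using assms finA finite_subset by auto
  show "S \<noteq> {} \<longrightarrow> card (cut G S) \<ge> 3"
  proof
    assume ne: "S \<noteq> {}"
    hence "card S \<ge> 1" using \<open>finite S\<close> by (simp add: Suc_leI card_gt_0_iff)
    thus "card (cut G S) \<ge> 3" using N[OF assms ne] by linarith
  qed
  show "card S \<ge> 2 \<longrightarrow> card (cut G S) \<ge> 4"
  proof
    assume "card S \<ge> 2" hence "S \<noteq> {}" by auto
    thus "card (cut G S) \<ge> 4" using N[OF assms] \<open>card S \<ge> 2\<close> by linarith
  qed
qed

lemma cg_formula:
  assumes "S \<subseteq> A"
  shows "card (cut G S) = card (CA S) + of_bool (vv 1 \<in> S) + of_bool (vv 2 \<in> S) + of_bool (vv 3 \<in> S) + of_bool (vv 4 \<in> S)"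
  using cutG[OF assms] card_1_4 by simp

lemma cr_formula:
  assumes "S \<subseteq> A"
  shows "card (cut G (A - S)) = card (CA S) + of_bool (vv 1 \<notin> S) + of_bool (vv 2 \<notin> S) + of_bool (vv 3 \<notin> S) + of_bool (vv 4 \<notin> S)"
proof -
  have "vv m \<in> A" if "m \<in> {1..4}" for m using vv(1) that by blast
  hence i: "vv 1 \<in> A" "vv 2 \<in> A" "vv 3 \<in> A" "vv 4 \<in> A" by auto
  have "card (cut G (A - S)) = card (CA S) + of_bool (vv 1 \<in> A - S) + of_bool (vv 2 \<in> A - S) + of_bool (vv 3 \<in> A - S) + of_bool (vv 4 \<in> A - S)"
    using cg_formula[of "A - S"] CA_compl[OF assms] by simp
  thus ?thesis using i by simp
qed

lemma S_empty: "CA {} = {}" unfolding CA_def by simp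
lemma S_full: "CA A = {}" unfolding CA_def by simp

definition H :: "nat \<Rightarrow> ('v + bool, 'e + nat) multigraph" where "H j = GA G A cs 1 j"

lemma H_simps:
  "verts (H j) = Inl ` A \<union> {Inr True, Inr False}"
  "edges (H j) = Inl ` EA \<union> Inr ` {0..4}"
  "ends (H j) (Inl e) = Inl ` ends G e"
  "ends (H j) (Inr m) = (if m = 0 then {Inr True, Inr False} else {Inl (vv m), Inr (m = 1 \<or> m = j)})"
  by (simp_all add: H_def GA_def EA_def vv_def)

lemma two_meet: "a \<in> V \<Longrightarrow> b \<in> V \<Longrightarrow> ({a,b} \<inter> X \<noteq> {} \<and> {a,b} \<inter> (V - X) \<noteq> {}) \<longleftrightarrow> ((a \<in> X) \<noteq> (b \<in> X))"
  by auto

definition crs :: "nat \<Rightarrow> 'v set \<Rightarrow> bool \<Rightarrow> nat \<Rightarrow> bool" where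
  "crs j S t m = (if m = 0 then t else (vv m \<in> S) \<noteq> (t \<and> (m = 1 \<or> m = j)))"

lemma cutH:
  assumes X: "X \<subseteq> verts (H j)" "Inr False \<notin> X"
  defines "S \<equiv> {v. Inl v \<in> X}" and "t \<equiv> Inr True \<in> X"
  shows "cut (H j) X = Inl ` CA S \<union> Inr ` {m \<in> {0..4}. crs j S t m}"
proof (rule set_eqI)
  fix x
  have SA: "S \<subseteq> A" using X unfolding S_def H_simps by auto
  show "x \<in> cut (H j) X \<longleftrightarrow> x \<in> Inl ` CA S \<union> Inr ` {m \<in> {0..4}. crs j S t m}"
  proof (cases x)
    case (Inl e)
    have ed: "Inl e \<in> edges (H j) \<longleftrightarrow> e \<in> EA" unfolding H_simps by blast
    have "x \<in> cut (H j) X \<longleftrightarrow> e \<in> EA \<and> Inl ` ends G e \<inter> X \<noteq> {} \<and> Inl ` ends G e \<inter> (verts (H j) - X) \<noteq> {}"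
      unfolding cut_def Inl mem_Collect_eq ed H_simps(3) ..
    also have "\<dots> \<longleftrightarrow> e \<in> CA S"
    proof
      assume h: "e \<in> EA \<and> Inl ` ends G e \<inter> X \<noteq> {} \<and> Inl ` ends G e \<inter> (verts (H j) - X) \<noteq> {}"
      hence eA: "ends G e \<subseteq> A" "e \<in> edges G" unfolding EA_def by auto
      from h obtain u where "u \<in> ends G e" "Inl u \<in> X" by blast
      hence 1: "ends G e \<inter> S \<noteq> {}" unfolding S_def by blast
      from h obtain w where "w \<in> ends G e" "Inl w \<notin> X" by blast
      hence 2: "ends G e \<inter> (A - S) \<noteq> {}" using eA unfolding S_def by blast
      show "e \<in> CA S" using 1 2 eA unfolding CA_def by blast
    next
      assume "e \<in> CA S"
      hence eA: "ends G e \<subseteq> A" "e \<in> edges G" "ends G e \<inter> S \<noteq> {}" "ends G e \<inter> (A - S) \<noteq> {}"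
        unfolding CA_def by auto
      obtain u where "u \<in> ends G e" "u \<in> S" using eA(3) by blast
      hence 1: "Inl ` ends G e \<inter> X \<noteq> {}" unfolding S_def by blast
      obtain w where "w \<in> ends G e" "w \<in> A" "w \<notin> S" using eA(4) by blast
      hence "Inl w \<in> verts (H j) - X" unfolding S_def H_simps by blast
      hence 2: "Inl ` ends G e \<inter> (verts (H j) - X) \<noteq> {}" using \<open>w \<in> ends G e\<close> by blast
      show "e \<in> EA \<and> Inl ` ends G e \<inter> X \<noteq> {} \<and> Inl ` ends G e \<inter> (verts (H j) - X) \<noteq> {}"
        using 1 2 eA unfolding EA_def by blast
    qed
    also have "\<dots> \<longleftrightarrow> x \<in> Inl ` CA S \<union> Inr ` {m \<in> {0..4}. crs j S t m}" unfolding Inl by blast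
    finally show ?thesis .
  next
    case (Inr m)
    have ed: "Inr m \<in> edges (H j) \<longleftrightarrow> m \<in> {0..4}" unfolding H_simps by blast
    have "x \<in> cut (H j) X \<longleftrightarrow> m \<in> {0..4} \<and> ends (H j) (Inr m) \<inter> X \<noteq> {} \<and> ends (H j) (Inr m) \<inter> (verts (H j) - X) \<noteq> {}"
      unfolding cut_def Inr mem_Collect_eq ed ..
    also have "\<dots> \<longleftrightarrow> m \<in> {0..4} \<and> crs j S t m"
    proof (cases "m = 0")
      case True
      have "Inr False \<in> verts (H j) - X" using X(2) unfolding H_simps by blast
      hence 1: "ends (H j) (Inr m) \<inter> (verts (H j) - X) \<noteq> {}" using True by (simp add: H_simps)
      have 2: "ends (H j) (Inr m) \<inter> X \<noteq> {} \<longleftrightarrow> t" using True X(2) unfolding t_def by (simp add: H_simps)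
      have 3: "crs j S t m = t" using True unfolding crs_def by simp
      show ?thesis using 1 2 3 True by simp
    next
      case False
      show ?thesis
      proof (cases "m \<in> {0..4}")
        case mm: True
        hence m14: "m \<in> {1..4}" using False by auto
        have va: "Inl (vv m) \<in> verts (H j)" using vv(1)[OF m14] unfolding H_simps by blast
        have vb: "Inr b \<in> verts (H j)" for b unfolding H_simps by (cases b) auto
        have E: "ends (H j) (Inr m) = {Inl (vv m), Inr (m = 1 \<or> m = j)}" using False by (simp add: H_simps)
        have A1: "Inl (vv m) \<in> X \<longleftrightarrow> vv m \<in> S" unfolding S_def by simp
        have A2: "Inr (m = 1 \<or> m = j) \<in> X \<longleftrightarrow> ((m = 1 \<or> m = j) \<and> t)"
          using X(2) unfolding t_def by (cases "m = 1 \<or> m = j") auto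
        have "ends (H j) (Inr m) \<inter> X \<noteq> {} \<and> ends (H j) (Inr m) \<inter> (verts (H j) - X) \<noteq> {}
             \<longleftrightarrow> (Inl (vv m) \<in> X) \<noteq> (Inr (m = 1 \<or> m = j) \<in> X)"
          unfolding E by (rule two_meet[OF va vb])
        also have "\<dots> \<longleftrightarrow> (vv m \<in> S) \<noteq> ((m = 1 \<or> m = j) \<and> t)" by (simp only: A1 A2)
        also have "\<dots> \<longleftrightarrow> (vv m \<in> S) \<noteq> (t \<and> (m = 1 \<or> m = j))" by (simp only: conj_commute)
        finally have "ends (H j) (Inr m) \<inter> X \<noteq> {} \<and> ends (H j) (Inr m) \<inter> (verts (H j) - X) \<noteq> {}
             \<longleftrightarrow> (vv m \<in> S) \<noteq> (t \<and> (m = 1 \<or> m = j))" .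
        thus ?thesis using mm False unfolding crs_def by simp
      next
        case False
        thus ?thesis by simp
      qed
    qed
    also have "\<dots> \<longleftrightarrow> x \<in> Inl ` CA S \<union> Inr ` {m \<in> {0..4}. crs j S t m}" unfolding Inr by blast
    finally show ?thesis .
  qed
qed

lemma cardcutH:
  assumes X: "X \<subseteq> verts (H j)" "Inr False \<notin> X"
  defines "S \<equiv> {v. Inl v \<in> X}" and "t \<equiv> Inr True \<in> X"
  shows "card (cut (H j) X) = card (CA S) + of_bool t + of_bool ((vv 1 \<in> S) \<noteq> t)
     + of_bool ((vv 2 \<in> S) \<noteq> (t \<and> 2 = j)) + of_bool ((vv 3 \<in> S) \<noteq> (t \<and> 3 = j)) + of_bool ((vv 4 \<in> S) \<noteq> (t \<and> 4 = j))"
proof -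
  have f: "finite (CA S)" using finE unfolding CA_def by simp
  have "card (cut (H j) X) = card (Inl ` CA S :: ('e + nat) set) + card (Inr ` {m \<in> {0..4}. crs j S t m} :: ('e + nat) set)"
    unfolding cutH[OF X, folded S_def t_def] using f by (subst card_Un_disjoint) auto
  also have "\<dots> = card (CA S) + card {m \<in> {0..4}. crs j S t m}"
    by (simp add: card_image)
  also have "card {m \<in> {0..4}. crs j S t m} = of_bool t + of_bool ((vv 1 \<in> S) \<noteq> t)
     + of_bool ((vv 2 \<in> S) \<noteq> (t \<and> 2 = j)) + of_bool ((vv 3 \<in> S) \<noteq> (t \<and> 3 = j)) + of_bool ((vv 4 \<in> S) \<noteq> (t \<and> 4 = j))"
    unfolding card_0_4 crs_def by simp
  finally show ?thesis by simp
qed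

lemma X_decomp:
  assumes X: "X \<subseteq> verts (H j)" "Inr False \<notin> X"
  defines "S \<equiv> {v. Inl v \<in> X}" and "t \<equiv> Inr True \<in> X"
  shows "S \<subseteq> A" "card X = card S + of_bool t" "card (verts (H j) - X) = card (A - S) + 1 + of_bool (\<not> t)"
proof -
  show SA: "S \<subseteq> A" using X unfolding S_def H_simps by auto
  have fS: "finite S" using SA finA finite_subset by auto
  have rr: "Inr b \<in> X \<longleftrightarrow> b \<and> t" for b using X(2) unfolding t_def by (cases b) auto
  have ci: "card (Inl ` U :: ('v + bool) set) = card U" for U by (rule card_image) simp
  have fi: "finite (Inl ` U :: ('v + bool) set)" if "finite U" for U using that by simp
  have "X = (if t then insert (Inr True) (Inl ` S) else Inl ` S)"
  proof (rule set_eqI)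
    fix x show "x \<in> X \<longleftrightarrow> x \<in> (if t then insert (Inr True) (Inl ` S) else Inl ` S)"
      using rr unfolding S_def by (cases x) auto
  qed
  moreover have "Inr True \<notin> (Inl ` S :: ('v + bool) set)" by blast
  ultimately show "card X = card S + of_bool t" using fi[OF fS] ci[of S] by (cases t) simp_all
  have fA: "finite (A - S)" using finA by simp
  have "verts (H j) - X = insert (Inr False) (if t then Inl ` (A - S) else insert (Inr True) (Inl ` (A - S)))"
  proof (rule set_eqI)
    fix x show "x \<in> verts (H j) - X \<longleftrightarrow> x \<in> insert (Inr False) (if t then Inl ` (A - S) else insert (Inr True) (Inl ` (A - S)))"
      using rr X(1) unfolding S_def H_simps by (cases x) auto
  qed
  moreover have "Inr True \<notin> (Inl ` (A - S) :: ('v + bool) set)" "Inr False \<notin> (Inl ` (A - S) :: ('v + bool) set)" by blast+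
  ultimately show "card (verts (H j) - X) = card (A - S) + 1 + of_bool (\<not> t)"
    using fi[OF fA] ci[of "A - S"] by (cases t) simp_all
qed

end


lemma arithT2:
  fixes a s r g c y1 y2 y3 y4 :: nat
  assumes "y1 \<le> 1" "y2 \<le> 1" "y3 \<le> 1" "y4 \<le> 1"
    "g = a + y1 + y2 + y3 + y4" "c = a + (1 - y1) + (1 - y2) + (1 - y3) + (1 - y4)"
    "s > 0 \<longrightarrow> g \<ge> 3" "s \<ge> 2 \<longrightarrow> g \<ge> 4" "r > 0 \<longrightarrow> c \<ge> 3" "r \<ge> 2 \<longrightarrow> c \<ge> 4"
    "s = 0 \<longrightarrow> a = 0 \<and> y1 + y2 + y3 + y4 = 0"
    "r = 0 \<longrightarrow> a = 0 \<and> y1 + y2 + y3 + y4 = 4"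
    "s + r \<ge> 3"
  shows "a + 1 + (1 - y1) + (1 - y2) + y3 + y4 \<ge> 3 \<and>
    (s \<ge> 1 \<longrightarrow> r \<ge> 1 \<longrightarrow> a + 1 + (1 - y1) + (1 - y2) + y3 + y4 \<le> 3 \<longrightarrow> y1 = 1 \<and> y2 = 1 \<and> y3 = 0 \<and> y4 = 0 \<and> a = 2)"
proof -
  have p: "y1 + y2 \<le> 2" "y3 + y4 \<le> 2" using assms(1-4) by linarith+
  have c: "c = a + (2 - (y1 + y2)) + (2 - (y3 + y4))" using assms(1-4,6) by linarith
  have e: "a + 1 + (1 - y1) + (1 - y2) + y3 + y4 = a + 1 + (2 - (y1 + y2)) + (y3 + y4)" using assms(1-4) by linarith
  define p where "p = y1 + y2"
  define q where "q = y3 + y4"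
  have g: "g = a + p + q" using assms(5) unfolding p_def q_def by simp
  have "a + 1 + (2 - p) + q \<ge> 3 \<and> (s \<ge> 1 \<longrightarrow> r \<ge> 1 \<longrightarrow> a + 1 + (2 - p) + q \<le> 3 \<longrightarrow> p = 2 \<and> q = 0 \<and> a = 2)"
    using assms(7-13) p c g unfolding p_def[symmetric] q_def[symmetric] by linarith
  thus ?thesis using e assms(1-4) unfolding p_def q_def by linarith
qed

lemma ob_not: "(of_bool (\<not> x) :: nat) = 1 - of_bool x" by (cases x) auto
lemma ob_le: "(of_bool x :: nat) \<le> 1" by (cases x) auto
lemma ob_1: "((of_bool x :: nat) = 1) = x" by (cases x) auto
lemma ob_0: "((of_bool x :: nat) = 0) = (\<not> x)" by (cases x) auto

context cset
begin

lemma finVH: "finite (verts (H j))" unfolding H_simps using finA by simp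

lemma normal:
  assumes j: "j \<in> {2,3,4}" and X: "X \<subseteq> verts (H j)" "Inr False \<notin> X"
  shows "X \<noteq> {} \<Longrightarrow> 3 \<le> card (cut (H j) X)"
    and "2 \<le> card X \<Longrightarrow> 2 \<le> card (verts (H j) - X) \<Longrightarrow> card (cut (H j) X) \<le> 3 \<Longrightarrow>
          (\<forall>m\<in>{1..4}. Inr m \<notin> cut (H j) X) \<and>
          (\<exists>S\<subseteq>A. (\<forall>m\<in>{1..4}. vv m \<in> S \<longleftrightarrow> (m = 1 \<or> m = j)) \<and> card (CA S) = 2)"
proof -
  define S where "S = {v. Inl v \<in> X}"
  define t where "t = (Inr True \<in> X)"
  note XD = X_decomp[OF X, folded S_def t_def]
  have SA: "S \<subseteq> A" by (rule XD(1))
  have fS: "finite S" using SA finA finite_subset by auto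
  define a where "a = card (CA S)"
  define s where "s = card S"
  define r where "r = card (A - S)"
  define g where "g = card (cut G S)"
  define c where "c = card (cut G (A - S))"
  define h where "h = card (cut (H j) X)"
  define y1 where "y1 = (of_bool (vv 1 \<in> S) :: nat)"
  define y2 where "y2 = (of_bool (vv 2 \<in> S) :: nat)"
  define y3 where "y3 = (of_bool (vv 3 \<in> S) :: nat)"
  define y4 where "y4 = (of_bool (vv 4 \<in> S) :: nat)"
  have ys: "y1 \<le> 1" "y2 \<le> 1" "y3 \<le> 1" "y4 \<le> 1" unfolding y1_def y2_def y3_def y4_def by (rule ob_le)+
  have gf: "g = a + y1 + y2 + y3 + y4" unfolding g_def a_def y1_def y2_def y3_def y4_def by (rule cg_formula[OF SA])
  have cf: "c = a + (1 - y1) + (1 - y2) + (1 - y3) + (1 - y4)"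
    unfolding c_def a_def y1_def y2_def y3_def y4_def cr_formula[OF SA] ob_not ..
  have hf: "h = a + of_bool t + of_bool ((vv 1 \<in> S) \<noteq> t)
     + of_bool ((vv 2 \<in> S) \<noteq> (t \<and> 2 = j)) + of_bool ((vv 3 \<in> S) \<noteq> (t \<and> 3 = j)) + of_bool ((vv 4 \<in> S) \<noteq> (t \<and> 4 = j))"
    unfolding h_def a_def S_def t_def by (rule cardcutH[OF X])
  have NS: "s > 0 \<longrightarrow> g \<ge> 3" "s \<ge> 2 \<longrightarrow> g \<ge> 4"
    using Nsets[OF SA] fS unfolding s_def g_def by auto
  have SA': "A - S \<subseteq> A" by blast
  have NR: "r > 0 \<longrightarrow> c \<ge> 3" "r \<ge> 2 \<longrightarrow> c \<ge> 4"
  proof -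
    show "r > 0 \<longrightarrow> c \<ge> 3"
    proof
      assume "r > 0" hence "A - S \<noteq> {}" unfolding r_def by (metis card.empty less_irrefl)
      thus "c \<ge> 3" using Nsets(1)[OF SA'] unfolding c_def by blast
    qed
    show "r \<ge> 2 \<longrightarrow> c \<ge> 4" using Nsets(2)[OF SA'] unfolding c_def r_def by blast
  qed
  have vA: "vv 1 \<in> A" "vv 2 \<in> A" "vv 3 \<in> A" "vv 4 \<in> A" using vv(1) by auto
  have h3: "s = 0 \<longrightarrow> a = 0 \<and> y1 + y2 + y3 + y4 = 0"
  proof
    assume "s = 0" hence "S = {}" using fS unfolding s_def by simp
    thus "a = 0 \<and> y1 + y2 + y3 + y4 = 0" unfolding a_def y1_def y2_def y3_def y4_def by (simp add: S_empty)
  qed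
  have h4: "r = 0 \<longrightarrow> a = 0 \<and> y1 + y2 + y3 + y4 = 4"
  proof
    assume "r = 0" hence "A - S = {}" using finA unfolding r_def by simp
    hence "S = A" using SA by blast
    thus "a = 0 \<and> y1 + y2 + y3 + y4 = 4" unfolding a_def y1_def y2_def y3_def y4_def using vA by (simp add: S_full)
  qed
  have sr: "s + r \<ge> 3"
  proof -
    have "card A = card S + card (A - S)" using card_Diff_subset[OF fS SA] card_mono[OF finA SA] by simp
    thus ?thesis using cardA3 unfolding s_def r_def by simp
  qed
  have cX: "card X = s + of_bool t" unfolding s_def by (rule XD(2))
  have cV: "card (verts (H j) - X) = r + 1 + of_bool (\<not> t)" unfolding r_def by (rule XD(3))
  have finX: "finite X" using X(1) finVH finite_subset by blast
  have key: "3 \<le> h \<and> (t \<longrightarrow> s \<ge> 1 \<longrightarrow> r \<ge> 1 \<longrightarrow> h \<le> 3 \<longrightarrow>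
     (vv 1 \<in> S) \<and> (vv 2 \<in> S \<longleftrightarrow> 2 = j) \<and> (vv 3 \<in> S \<longleftrightarrow> 3 = j) \<and> (vv 4 \<in> S \<longleftrightarrow> 4 = j) \<and> a = 2)"
    if tt: "t"
  proof -
    have j': "j = 2 \<or> j = 3 \<or> j = 4" using j by auto
    thus ?thesis
    proof (elim disjE)
      assume jj: "j = 2"
      have "h = a + 1 + (1 - y1) + (1 - y2) + y3 + y4"
        unfolding hf y1_def y2_def y3_def y4_def using tt jj by (simp add: ob_not)
      moreover have "a + 1 + (1 - y1) + (1 - y2) + y3 + y4 \<ge> 3 \<and>
        (s \<ge> 1 \<longrightarrow> r \<ge> 1 \<longrightarrow> a + 1 + (1 - y1) + (1 - y2) + y3 + y4 \<le> 3 \<longrightarrow> y1 = 1 \<and> y2 = 1 \<and> y3 = 0 \<and> y4 = 0 \<and> a = 2)"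
        by (rule arithT2[OF ys gf cf NS NR h3 h4 sr])
      ultimately have "3 \<le> h \<and> (s \<ge> 1 \<longrightarrow> r \<ge> 1 \<longrightarrow> h \<le> 3 \<longrightarrow> y1 = 1 \<and> y2 = 1 \<and> y3 = 0 \<and> y4 = 0 \<and> a = 2)" by simp
      thus ?thesis using jj unfolding y1_def y2_def y3_def y4_def ob_1 ob_0 by auto
    next
      assume jj: "j = 3"
      have "h = a + 1 + (1 - y1) + (1 - y3) + y2 + y4"
        unfolding hf y1_def y2_def y3_def y4_def using tt jj by (simp add: ob_not)
      moreover have "a + 1 + (1 - y1) + (1 - y3) + y2 + y4 \<ge> 3 \<and>
        (s \<ge> 1 \<longrightarrow> r \<ge> 1 \<longrightarrow> a + 1 + (1 - y1) + (1 - y3) + y2 + y4 \<le> 3 \<longrightarrow> y1 = 1 \<and> y3 = 1 \<and> y2 = 0 \<and> y4 = 0 \<and> a = 2)"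
        by (rule arithT2[of y1 y3 y2 y4 g a c s r]) (use ys gf cf NS NR h3 h4 sr in linarith)+
      ultimately have "3 \<le> h \<and> (s \<ge> 1 \<longrightarrow> r \<ge> 1 \<longrightarrow> h \<le> 3 \<longrightarrow> y1 = 1 \<and> y3 = 1 \<and> y2 = 0 \<and> y4 = 0 \<and> a = 2)" by simp
      thus ?thesis using jj unfolding y1_def y2_def y3_def y4_def ob_1 ob_0 by auto
    next
      assume jj: "j = 4"
      have "h = a + 1 + (1 - y1) + (1 - y4) + y2 + y3"
        unfolding hf y1_def y2_def y3_def y4_def using tt jj by (simp add: ob_not)
      moreover have "a + 1 + (1 - y1) + (1 - y4) + y2 + y3 \<ge> 3 \<and>
        (s \<ge> 1 \<longrightarrow> r \<ge> 1 \<longrightarrow> a + 1 + (1 - y1) + (1 - y4) + y2 + y3 \<le> 3 \<longrightarrow> y1 = 1 \<and> y4 = 1 \<and> y2 = 0 \<and> y3 = 0 \<and> a = 2)"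
        by (rule arithT2[of y1 y4 y2 y3 g a c s r]) (use ys gf cf NS NR h3 h4 sr in linarith)+
      ultimately have "3 \<le> h \<and> (s \<ge> 1 \<longrightarrow> r \<ge> 1 \<longrightarrow> h \<le> 3 \<longrightarrow> y1 = 1 \<and> y4 = 1 \<and> y2 = 0 \<and> y3 = 0 \<and> a = 2)" by simp
      thus ?thesis using jj unfolding y1_def y2_def y3_def y4_def ob_1 ob_0 by auto
    qed
  qed
  have hF: "h = g" if "\<not> t" unfolding hf gf y1_def y2_def y3_def y4_def using that by simp
  show "X \<noteq> {} \<Longrightarrow> 3 \<le> card (cut (H j) X)"
  proof -
    assume "X \<noteq> {}"
    hence "card X > 0" using finX by (simp add: card_gt_0_iff)
    show ?thesis
    proof (cases t)
      case True thus ?thesis using key unfolding h_def by blast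
    next
      case False
      hence "s > 0" using cX \<open>card X > 0\<close> by simp
      thus ?thesis using NS hF False unfolding h_def by simp
    qed
  qed
  assume c2: "2 \<le> card X" and v2: "2 \<le> card (verts (H j) - X)" and h3': "card (cut (H j) X) \<le> 3"
  have tt: t
  proof (rule ccontr)
    assume "\<not> t"
    hence "s \<ge> 2" using c2 cX by simp
    thus False using NS hF \<open>\<not> t\<close> h3' unfolding h_def by simp
  qed
  have "s \<ge> 1" "r \<ge> 1" using c2 cX v2 cV tt by simp_all
  hence pat: "(vv 1 \<in> S) \<and> (vv 2 \<in> S \<longleftrightarrow> 2 = j) \<and> (vv 3 \<in> S \<longleftrightarrow> 3 = j) \<and> (vv 4 \<in> S \<longleftrightarrow> 4 = j) \<and> a = 2"
    using key[OF tt] h3' tt unfolding h_def by blast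
  have pat': "\<forall>m\<in>{1..4}. vv m \<in> S \<longleftrightarrow> (m = 1 \<or> m = j)"
  proof
    fix m :: nat assume "m \<in> {1..4}"
    hence "m = 1 \<or> m = 2 \<or> m = 3 \<or> m = 4" by auto
    thus "vv m \<in> S \<longleftrightarrow> (m = 1 \<or> m = j)" using pat j by auto
  qed
  have "\<forall>m\<in>{1..4}. Inr m \<notin> cut (H j) X"
  proof
    fix m :: nat assume m: "m \<in> {1..4}"
    have "\<not> crs j S t m" using pat' m tt unfolding crs_def by auto
    thus "Inr m \<notin> cut (H j) X" unfolding cutH[OF X, folded S_def t_def] by blast
  qed
  moreover have "\<exists>S\<subseteq>A. (\<forall>m\<in>{1..4}. vv m \<in> S \<longleftrightarrow> (m = 1 \<or> m = j)) \<and> card (CA S) = 2"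
    using SA pat' pat unfolding a_def by blast
  ultimately show "(\<forall>m\<in>{1..4}. Inr m \<notin> cut (H j) X) \<and>
          (\<exists>S\<subseteq>A. (\<forall>m\<in>{1..4}. vv m \<in> S \<longleftrightarrow> (m = 1 \<or> m = j)) \<and> card (CA S) = 2)" ..
qed

end


lemma card4: "a \<noteq> b \<Longrightarrow> a \<noteq> c \<Longrightarrow> a \<noteq> d \<Longrightarrow> b \<noteq> c \<Longrightarrow> b \<noteq> d \<Longrightarrow> c \<noteq> d \<Longrightarrow>
  card {m \<in> {a,b,c,d}. P m} = of_bool (P a) + of_bool (P b) + of_bool (P c) + of_bool (P d)"
proof -
  assume d: "a \<noteq> b" "a \<noteq> c" "a \<noteq> d" "b \<noteq> c" "b \<noteq> d" "c \<noteq> d"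
  have "card {m \<in> {a,b,c,d}. P m} = (\<Sum>m\<in>{a,b,c,d}. (of_bool (P m) :: nat))" by (rule card_filter_sum) simp
  also have "\<dots> = of_bool (P a) + (of_bool (P b) + (of_bool (P c) + of_bool (P d)))"
    using d by (subst sum.insert; simp)+
  finally show ?thesis by (simp only: add.assoc)
qed

context cset
begin

lemma four_cycle:
  assumes jj: "j \<in> {2,3,4}" "j' \<in> {2,3,4}" "r \<in> {2,3,4}" "j \<noteq> j'" "j \<noteq> r" "j' \<noteq> r"
    and S: "S \<subseteq> A" "\<forall>m\<in>{1..4}. vv m \<in> S \<longleftrightarrow> (m = 1 \<or> m = j)" "card (CA S) = 2"
    and S': "S' \<subseteq> A" "\<forall>m\<in>{1..4}. vv m \<in> S' \<longleftrightarrow> (m = 1 \<or> m = j')" "card (CA S') = 2"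
  shows "is_4cycle (induced G A)"
proof -
  have I: "{1..4::nat} = {1, j, j', r}" using jj by auto
  have dI: "(1::nat) \<noteq> j" "(1::nat) \<noteq> j'" "(1::nat) \<noteq> r" "j \<noteq> j'" "j \<noteq> r" "j' \<noteq> r" using jj by auto
  have m4: "1 \<in> {1..4::nat}" "j \<in> {1..4}" "j' \<in> {1..4}" "r \<in> {1..4}" using jj by auto
  define a1 where "a1 = vv 1"
  define aj where "aj = vv j"
  define aj' where "aj' = vv j'"
  define ar where "ar = vv r"
  have inA: "a1 \<in> A" "aj \<in> A" "aj' \<in> A" "ar \<in> A" unfolding a1_def aj_def aj'_def ar_def using vv(1) m4 by auto
  have pS: "a1 \<in> S" "aj \<in> S" "aj' \<notin> S" "ar \<notin> S"
    unfolding a1_def aj_def aj'_def ar_def using S(2) m4 dI by auto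
  have pS': "a1 \<in> S'" "aj \<notin> S'" "aj' \<in> S'" "ar \<notin> S'"
    unfolding a1_def aj_def aj'_def ar_def using S'(2) m4 dI by auto
  have dv: "a1 \<noteq> aj" "a1 \<noteq> aj'" "a1 \<noteq> ar" "aj \<noteq> aj'" "aj \<noteq> ar" "aj' \<noteq> ar"
    using pS pS' by auto
  have cf: "card (cut G U) = card (CA U) + of_bool (a1 \<in> U) + of_bool (aj \<in> U) + of_bool (aj' \<in> U) + of_bool (ar \<in> U)"
    if "U \<subseteq> A" for U
    using cutG[OF that] unfolding I card4[OF dI] a1_def aj_def aj'_def ar_def by simp
  have cfc: "card (cut G (A - U)) = card (CA U) + of_bool (a1 \<notin> U) + of_bool (aj \<notin> U) + of_bool (aj' \<notin> U) + of_bool (ar \<notin> U)"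
    if "U \<subseteq> A" for U
    using cf[of "A - U"] CA_compl[OF that] inA by simp
  have V: "A \<subseteq> verts G" by (rule AV)
  have Q: "card U \<le> 1" if "card (cut G U) \<le> 3" "U \<subseteq> A" for U
  proof (rule ccontr)
    assume "\<not> card U \<le> 1" hence "card U \<ge> 2" by simp
    hence "card (cut G U) \<ge> 4" using Nsets(2)[OF that(2)] by (rule mp[rotated])
    thus False using that(1) by simp
  qed
  have Q3: "card (cut G U) \<ge> 3" if "U \<subseteq> A" "U \<noteq> {}" for U
    using Nsets(1)[OF that(1)] that(2) by (rule mp)
  have cS: "card (cut G S) = 4" using cf[OF S(1)] pS S(3) by simp
  have cS': "card (cut G S') = 4" using cf[OF S'(1)] pS' S'(3) by simp
  have cAS: "card (cut G (A - S)) = 4" using cfc[OF S(1)] pS S(3) by simp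
  have cAS': "card (cut G (A - S')) = 4" using cfc[OF S'(1)] pS' S'(3) by simp
  define Q1 where "Q1 = S \<inter> S'"
  define Q2 where "Q2 = S \<inter> (A - S')"
  define Q3' where "Q3' = S' - S"
  define Q4 where "Q4 = A - (S \<union> S')"
  have SSu: "S \<union> S' \<subseteq> A" using S(1) S'(1) by blast
  have sub1: "card (cut G Q1) + card (cut G (S \<union> S')) \<le> 8"
    using submod[of S S'] S(1) S'(1) V cS cS' unfolding Q1_def by auto
  have u1: "card (cut G (S \<union> S')) = card (cut G Q4) + 2"
    using cf[OF SSu] cfc[OF SSu] pS pS' unfolding Q4_def by simp
  have q1A: "Q1 \<subseteq> A" "Q4 \<subseteq> A" "Q2 \<subseteq> A" "Q3' \<subseteq> A" using S(1) S'(1) unfolding Q1_def Q4_def Q2_def Q3'_def by auto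
  have q1n: "a1 \<in> Q1" "ar \<in> Q4" "aj \<in> Q2" "aj' \<in> Q3'" using pS pS' inA unfolding Q1_def Q4_def Q2_def Q3'_def by auto
  have "card (cut G Q1) \<ge> 3" "card (cut G Q4) \<ge> 3" using Q3 q1A q1n by blast+
  hence "card (cut G Q1) \<le> 3" "card (cut G Q4) \<le> 3" using sub1 u1 by linarith+
  hence c14: "card Q1 \<le> 1" "card Q4 \<le> 1" using Q q1A by blast+
  have SA'u: "S \<union> (A - S') = A - Q3'" using S(1) S'(1) unfolding Q3'_def by blast
  have AS'A: "A - S' \<subseteq> A" by blast
  have sub2: "card (cut G Q2) + card (cut G (A - Q3')) \<le> 8"
    using submod[of S "A - S'"] S(1) V cS cAS' SA'u unfolding Q2_def by auto
  have Q3A: "Q3' \<subseteq> A" by (rule q1A(4))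
  have u2: "card (cut G (A - Q3')) = card (cut G Q3') + 2"
    using cf[OF Q3A] cfc[OF Q3A] pS pS' unfolding Q3'_def by simp
  have "card (cut G Q2) \<ge> 3" "card (cut G Q3') \<ge> 3" using Q3 q1A q1n by blast+
  hence "card (cut G Q2) \<le> 3" "card (cut G Q3') \<le> 3" using sub2 u2 by linarith+
  hence c23: "card Q2 \<le> 1" "card Q3' \<le> 1" using Q q1A by blast+
  have fin: "finite Q1" "finite Q2" "finite Q3'" "finite Q4" using q1A finA finite_subset by blast+
  have single: "U = {x}" if "finite U" "card U \<le> 1" "x \<in> U" for U and x :: 'v
    using that by (metis card_le_Suc0_iff_eq One_nat_def singletonI subsetI subset_antisym singletonD)
  have Qs: "Q1 = {a1}" "Q2 = {aj}" "Q3' = {aj'}" "Q4 = {ar}"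
    using single fin c14 c23 q1n by blast+
  have Aeq: "A = {a1, aj, aj', ar}"
  proof -
    have "A = Q1 \<union> Q2 \<union> Q3' \<union> Q4" unfolding Q1_def Q2_def Q3'_def Q4_def using S(1) S'(1) by blast
    thus ?thesis unfolding Qs by blast
  qed
  have Seq: "S = {a1, aj}" using Aeq pS S(1) by blast
  have S'eq: "S' = {a1, aj'}" using Aeq pS' S'(1) by blast
  have ASeq: "A - S = {aj', ar}" using Aeq pS dv by blast
  have AS'eq: "A - S' = {aj, ar}" using Aeq pS' dv by blast
  obtain e1 where e1: "e1 \<in> edges G" "ends G e1 = {a1, aj}" using edge2[of a1 aj] inA dv cS Seq by auto
  obtain e2 where e2: "e2 \<in> edges G" "ends G e2 = {aj, ar}" using edge2[of aj ar] inA dv cAS' AS'eq by auto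
  obtain e3 where e3: "e3 \<in> edges G" "ends G e3 = {ar, aj'}"
    using edge2[of ar aj'] inA dv cAS ASeq by (auto simp: insert_commute)
  obtain e4 where e4: "e4 \<in> edges G" "ends G e4 = {aj', a1}"
    using edge2[of aj' a1] inA dv cS' S'eq by (auto simp: insert_commute)
  define vs where "vs i = (if i = 0 then a1 else if i = 1 then aj else if i = 2 then ar else aj')" for i :: nat
  define es where "es i = (if i = 0 then e1 else if i = 1 then e2 else if i = 2 then e3 else e4)" for i :: nat
  have L4: "{..<4::nat} = {0,1,2,3}" by auto
  have de: "e1 \<noteq> e2" "e1 \<noteq> e3" "e1 \<noteq> e4" "e2 \<noteq> e3" "e2 \<noteq> e4" "e3 \<noteq> e4"
    using e1 e2 e3 e4 dv by (metis doubleton_eq_iff)+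
  have injv: "inj_on vs {..<4}" unfolding L4 vs_def using dv by (auto simp: inj_on_def)
  have inje: "inj_on es {..<4}" unfolding L4 es_def using de by (auto simp: inj_on_def)
  have EA4: "card {e \<in> edges G. ends G e \<subseteq> A} = 4"
  proof -
    have "card A = 4" unfolding Aeq using dv by simp
    thus ?thesis using hs[OF AV] cA by simp
  qed
  have esub: "es ` {..<4} \<subseteq> {e \<in> edges G. ends G e \<subseteq> A}"
    unfolding L4 es_def using e1 e2 e3 e4 Aeq by auto
  have ceq: "card (es ` {..<4}) = 4" using card_image[OF inje] by simp
  have eimg: "es ` {..<4} = {e \<in> edges G. ends G e \<subseteq> A}"
    by (rule card_subset_eq) (use finE esub ceq EA4 in auto)
  have vimg: "vs ` {..<4} = A" unfolding L4 vs_def Aeq by auto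
  have cyc: "is_cycle_in (induced G A) 4 vs es"
    unfolding is_cycle_in_def
  proof (intro conjI allI impI)
    show "(2::nat) \<le> 4" by simp
    show "inj_on vs {..<4}" by (rule injv)
    show "inj_on es {..<4}" by (rule inje)
    fix i :: nat assume i: "i < 4"
    show "vs i \<in> verts (induced G A)" using i vimg by (auto simp: induced_def)
    show "es i \<in> edges (induced G A)" using i eimg by (auto simp: induced_def)
    have "i = 0 \<or> i = 1 \<or> i = 2 \<or> i = 3" using i by auto
    thus "ends (induced G A) (es i) = {vs i, vs ((i + 1) mod 4)}"
      unfolding induced_def vs_def es_def using e1(2) e2(2) e3(2) e4(2) by (elim disjE) simp_all
  qed
  have "verts (induced G A) = A" "edges (induced G A) = {e \<in> edges G. ends G e \<subseteq> A}"
    by (simp_all add: induced_def)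
  thus ?thesis unfolding is_4cycle_def using cyc vimg eimg by metis
qed

end


context cset
begin

lemma claim1:
  assumes j: "j \<in> {2,3,4}"
  shows "edge_connected 3 (H j)"
  unfolding edge_connected_def
proof (intro allI impI)
  fix X assume X: "X \<subseteq> verts (H j) \<and> X \<noteq> {} \<and> X \<noteq> verts (H j)"
  show "3 \<le> card (cut (H j) X)"
  proof (cases "Inr False \<in> X")
    case False
    thus ?thesis using normal(1)[OF j _ False] X by blast
  next
    case True
    define X' where "X' = verts (H j) - X"
    have X'1: "X' \<subseteq> verts (H j)" "Inr False \<notin> X'" using True unfolding X'_def by auto
    have "X' \<noteq> {}" using X unfolding X'_def by blast
    hence "3 \<le> card (cut (H j) X')" using normal(1)[OF j X'1] by blast
    moreover have "cut (H j) X' = cut (H j) X" unfolding X'_def by (rule cut_compl) (use X in blast)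
    ultimately show ?thesis by simp
  qed
qed

lemma claim23:
  assumes j: "j \<in> {2,3,4}" and cyc: "cyclic_cut (H j) X" and c3: "card (cut (H j) X) \<le> 3"
  shows "(\<forall>m\<in>{1..4}. Inr m \<notin> cut (H j) X) \<and>
         (\<exists>S\<subseteq>A. (\<forall>m\<in>{1..4}. vv m \<in> S \<longleftrightarrow> (m = 1 \<or> m = j)) \<and> card (CA S) = 2)"
proof -
  have XV: "X \<subseteq> verts (H j)" using cyc by (simp add: cyclic_cut_def)
  have fX: "finite X" "finite (verts (H j) - X)" using XV finVH finite_subset by auto
  have cX: "2 \<le> card X" using cycle_card[of "H j" X] cyc fX(1) by (simp add: cyclic_cut_def)
  have cV: "2 \<le> card (verts (H j) - X)" using cycle_card[of "H j" "verts (H j) - X"] cyc fX(2)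
    by (simp add: cyclic_cut_def)
  show ?thesis
  proof (cases "Inr False \<in> X")
    case False
    thus ?thesis using normal(2)[OF j XV False cX cV c3] by blast
  next
    case True
    define X' where "X' = verts (H j) - X"
    have X'1: "X' \<subseteq> verts (H j)" "Inr False \<notin> X'" using True unfolding X'_def by auto
    have dd: "verts (H j) - X' = X" using XV unfolding X'_def by blast
    have cc: "cut (H j) X' = cut (H j) X" unfolding X'_def by (rule cut_compl[OF XV])
    have "2 \<le> card X'" using cV unfolding X'_def .
    moreover have "2 \<le> card (verts (H j) - X')" using cX unfolding dd .
    moreover have "card (cut (H j) X') \<le> 3" using c3 unfolding cc .
    ultimately show ?thesis using normal(2)[OF j X'1] unfolding cc by blast
  qed
qed

lemma bad:
  assumes j: "j \<in> {2,3,4}" and n: "\<not> cyc_edge_connected 4 (H j)"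
  shows "\<exists>S\<subseteq>A. (\<forall>m\<in>{1..4}. vv m \<in> S \<longleftrightarrow> (m = 1 \<or> m = j)) \<and> card (CA S) = 2"
proof -
  have "\<exists>X. cyclic_cut (H j) X \<and> \<not> 4 \<le> card (cut (H j) X)" using n unfolding cyc_edge_connected_def by blast
  then obtain X where X: "cyclic_cut (H j) X" "\<not> 4 \<le> card (cut (H j) X)" by blast
  hence "card (cut (H j) X) \<le> 3" by simp
  thus ?thesis using claim23[OF j X(1)] by blast
qed

lemma two_bad:
  assumes "j \<in> {2,3,4}" "j' \<in> {2,3,4}" "j \<noteq> j'"
    and "\<not> cyc_edge_connected 4 (H j)" "\<not> cyc_edge_connected 4 (H j')"
  shows "is_4cycle (induced G A)"
proof -
  obtain S where S: "S \<subseteq> A" "\<forall>m\<in>{1..4}. vv m \<in> S \<longleftrightarrow> (m = 1 \<or> m = j)" "card (CA S) = 2"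
    using bad[OF assms(1,4)] by blast
  obtain S' where S': "S' \<subseteq> A" "\<forall>m\<in>{1..4}. vv m \<in> S' \<longleftrightarrow> (m = 1 \<or> m = j')" "card (CA S') = 2"
    using bad[OF assms(2,5)] by blast
  define r where "r = (if j \<noteq> 2 \<and> j' \<noteq> 2 then 2 else if j \<noteq> 3 \<and> j' \<noteq> 3 then 3 else (4::nat))"
  have r: "r \<in> {2,3,4}" "j \<noteq> r" "j' \<noteq> r" using assms(1-3) unfolding r_def by auto
  show ?thesis by (rule four_cycle[OF assms(1,2) r(1) assms(3) r(2,3) S S'])
qed

end

theorem mainTheorem11:
  fixes G :: "('v, 'e) multigraph" and A :: "'v set" and cs :: "nat \<Rightarrow> 'e"
  assumes "cubic G"
    and "cyc_edge_connected 4 G"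
    and "cyclic_cut G A"
    and "card (cut G A) = 4"
    and "inj_on cs {1..4}"
    and "cs ` {1..4} = cut G A"
  shows "(\<forall>j \<in> {2, 3, 4}.
            edge_connected 3 (GA G A cs 1 j) \<and>
            (\<forall>m \<in> {1..4}. \<forall>X. cyclic_cut (GA G A cs 1 j) X \<and> card (cut (GA G A cs 1 j) X) = 3
                 \<longrightarrow> Inr m \<notin> cut (GA G A cs 1 j) X))
       \<and> (\<not> is_4cycle (induced G A) \<longrightarrow>
            card {j \<in> {2, 3, 4}. cyc_edge_connected 4 (GA G A cs 1 j)} \<ge> 2)"
proof -
  interpret cset G A cs using assms by unfold_locales
  have HH: "GA G A cs 1 j = H j" for j by (simp add: H_def)
  have p1: "\<forall>j \<in> {2, 3, 4}. edge_connected 3 (H j) \<and>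
            (\<forall>m \<in> {1..4}. \<forall>X. cyclic_cut (H j) X \<and> card (cut (H j) X) = 3 \<longrightarrow> Inr m \<notin> cut (H j) X)"
  proof (intro ballI conjI allI impI)
    fix j :: nat assume j: "j \<in> {2,3,4}"
    show "edge_connected 3 (H j)" by (rule claim1[OF j])
    fix m X assume m: "m \<in> {1..4::nat}" and X: "cyclic_cut (H j) X \<and> card (cut (H j) X) = 3"
    thus "Inr m \<notin> cut (H j) X" using claim23[OF j, of X] by auto
  qed
  have p2: "card {j \<in> {2, 3, 4}. cyc_edge_connected 4 (H j)} \<ge> 2" if n4: "\<not> is_4cycle (induced G A)"
  proof -
    define P where "P j = cyc_edge_connected 4 (H j)" for j
    have tb: "P j \<or> P j'" if "j \<in> {2,3,4}" "j' \<in> {2,3,4}" "j \<noteq> j'" for j j'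
      using two_bad[OF that] n4 unfolding P_def by blast
    have "card {j \<in> {2, 3, 4}. P j} = of_bool (P 2) + of_bool (P 3) + of_bool (P 4)" by (rule card_2_4)
    moreover have "P 2 \<or> P 3" "P 2 \<or> P 4" "P 3 \<or> P 4" using tb by auto
    ultimately have "card {j \<in> {2, 3, 4}. P j} \<ge> 2" by (cases "P 2"; cases "P 3"; cases "P 4") auto
    thus ?thesis unfolding P_def .
  qed
  show ?thesis unfolding HH using p1 p2 by blast
qed



end
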